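(* Let $p$ be a prime and let $R$ be a local nearring which is not a nearfield, whose additive group is $G_3=\langle a\rangle+\langle b\rangle$ with $ap^2=0$, $bp=0$, $a+b=b+a$, and suppose $a$ is the identity element of $R$. Write $x=ax_1+bx_2$ ($0\le x_1<p^2$, $0\le x_2<p$) and define $\alpha\colon R\to\mathbb Z_{p^2}$, $\beta\colon R\to\mathbb Z_p$ by $xb=a\alpha(x)+b\beta(x)$. Then for $x=ax_1+bx_2$, $y=ay_1+by_2$, $$xy=a(x_1y_1+\alpha(x)y_2)+b(x_2y_1+\beta(x)y_2),$$ and moreover: (0) $\alpha(0)=\beta(0)=0$ if and only if $R$ is zero-symmetric; (1) $\alpha(a)=0$ and $\beta(a)=1$; (2) $\alpha(x)\equiv0\pmod p$; (3) $\alpha(xy)\equiv x_1\alpha(y)+\alpha(x)\beta(y)\pmod p$; (4) $\beta(xy)\equiv x_2\alpha(y)+\beta(x)\beta(y)\pmod p$.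
   Context: A (left) nearring is a set $R$ with operations $+,\cdot$ such that $(R,+)$ is a group with neutral element $0$, $(R,\cdot)$ a semigroup, and $x(y+z)=xy+xz$ for all $x,y,z$. A nearring with identity is local if its non-invertible elements form a subgroup of $(R,+)$; a nearfield is a nearring with identity in which every nonzero element is invertible. $R$ is zero-symmetric if $0\cdot x=0$ for all $x$. Additive notation: $gk$ is $g$ added $k$ times. *)

theory Defs
  imports "HOL-Computational_Algebra.Primes" "HOL-Number_Theory.Cong"
begin

fun addmult :: "'a::monoid_add \<Rightarrow> nat \<Rightarrow> 'a" where
  "addmult g 0 = 0"
| "addmult g (Suc k) = addmult g k + g"

definition left_nearring :: "'a::{group_add, semigroup_mult} itself \<Rightarrow> bool" where
  "left_nearring _ \<longleftrightarrow> (\<forall>x y z::'a. x * (y + z) = x * y + x * z)"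

definition nr_identity :: "'a::{group_add, semigroup_mult} \<Rightarrow> bool" where
  "nr_identity e \<longleftrightarrow> (\<forall>x. e * x = x \<and> x * e = x)"

definition nr_invertible :: "'a::{group_add, semigroup_mult} \<Rightarrow> 'a \<Rightarrow> bool" where
  "nr_invertible e x \<longleftrightarrow> (\<exists>y. x * y = e \<and> y * x = e)"

definition nr_local :: "'a::{group_add, semigroup_mult} \<Rightarrow> bool" where
  "nr_local e \<longleftrightarrow> nr_identity e \<and>
     (let N = {x. \<not> nr_invertible e x} in
        0 \<in> N \<and> (\<forall>x\<in>N. \<forall>y\<in>N. x + y \<in> N) \<and> (\<forall>x\<in>N. - x \<in> N))"

definition nearfield :: "'a::{group_add, semigroup_mult} \<Rightarrow> bool" where
  "nearfield e \<longleftrightarrow> nr_identity e \<and> (\<forall>x. x \<noteq> 0 \<longrightarrow> nr_invertible e x)"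

definition zero_symmetric :: "'a::{group_add, semigroup_mult} itself \<Rightarrow> bool" where
  "zero_symmetric _ \<longleftrightarrow> (\<forall>x::'a. 0 * x = 0)"

definition coords :: "nat \<Rightarrow> 'a::group_add \<Rightarrow> 'a \<Rightarrow> 'a \<Rightarrow> nat \<times> nat" where
  "coords p a b x = (THE c. fst c < p^2 \<and> snd c < p \<and> x = addmult a (fst c) + addmult b (snd c))"

definition alpha :: "nat \<Rightarrow> 'a::{group_add, semigroup_mult} \<Rightarrow> 'a \<Rightarrow> 'a \<Rightarrow> nat" where
  "alpha p a b x = fst (coords p a b (x * b))"

definition beta :: "nat \<Rightarrow> 'a::{group_add, semigroup_mult} \<Rightarrow> 'a \<Rightarrow> 'a \<Rightarrow> nat" where
  "beta p a b x = snd (coords p a b (x * b))"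

end

theory Submission
  imports Defs
begin


lemma addmult_add: "addmult (g::'a::monoid_add) (m + n) = addmult g m + addmult g n"
  by (induction n) (simp_all add: add.assoc)

lemma addmult_zero [simp]: "addmult (0::'a::monoid_add) n = 0"
  by (induction n) simp_all

lemma addmult_commute1:
  assumes "(g::'a::monoid_add) + h = h + g"
  shows "addmult g m + h = h + addmult g m"
proof (induction m)
  case (Suc m)
  have "addmult g m + g + h = addmult g m + h + g" using assms by (simp add: add.assoc)
  also have "\<dots> = h + (addmult g m + g)" using Suc by (simp add: add.assoc)
  finally show ?case by simp
qed simp

lemma addmult_commute:
  assumes "(g::'a::monoid_add) + h = h + g"
  shows "addmult g m + addmult h n = addmult h n + addmult g m"
proof -
  have "h + addmult g m = addmult g m + h" using addmult_commute1[OF assms] by simp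
  from addmult_commute1[OF this, of n] show ?thesis by simp
qed

lemma addmult_self: "addmult (g::'a::monoid_add) m + g = g + addmult g m"
  by (rule addmult_commute1) simp

lemma addmult_mult_zero:
  assumes "addmult (g::'a::monoid_add) m = 0"
  shows "addmult g (m * q) = 0"
proof (induction q)
  case (Suc q)
  then show ?case using assms by (simp add: addmult_add)
qed simp

lemma addmult_mod:
  assumes "addmult (g::'a::monoid_add) m = 0"
  shows "addmult g n = addmult g (n mod m)"
proof -
  have "n = n mod m + m * (n div m)" by simp
  then have "addmult g n = addmult g (n mod m) + addmult g (m * (n div m))"
    by (metis addmult_add)
  then show ?thesis using addmult_mult_zero[OF assms] by simp
qed

lemma mult_zero_right_nr:
  assumes "left_nearring TYPE('a::{group_add, semigroup_mult})"
  shows "(x::'a) * 0 = 0"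
proof -
  have "x * (0 + 0) = x * 0 + x * 0" using assms unfolding left_nearring_def by blast
  then have "x * 0 = x * 0 + x * 0" by simp
  then have "x * 0 + x * 0 = 0 + x * 0" by simp
  then show ?thesis by (simp only: add_right_cancel)
qed

lemma mult_addmult:
  assumes "left_nearring TYPE('a::{group_add, semigroup_mult})"
  shows "(x::'a) * addmult y n = addmult (x * y) n"
proof (induction n)
  case 0 then show ?case using mult_zero_right_nr[OF assms] by simp
next
  case (Suc n) then show ?case using assms unfolding left_nearring_def by simp
qed

lemma addmult_mult: "addmult (g::'a::monoid_add) (m * n) = addmult (addmult g m) n"
  by (induction n) (simp_all add: addmult_add addmult_self)

locale setup9 =
  fixes p :: nat and a b :: "'a::{group_add, semigroup_mult}"
  assumes pr: "prime p"
    and ln: "left_nearring TYPE('a)"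
    and idn: "nr_identity a"
    and ap: "addmult a (p^2) = 0" and bp: "addmult b p = 0" and ab: "a + b = b + a"
    and bij: "bij_betw (\<lambda>(x1, x2). addmult a x1 + addmult b x2) ({..<p^2} \<times> {..<p}) (UNIV :: 'a set)"
begin

definition f :: "nat \<Rightarrow> nat \<Rightarrow> 'a" where "f i j = addmult a i + addmult b j"

lemma f_add: "f i j + f k l = f (i + k) (j + l)"
proof -
  have "f i j + f k l = addmult a i + (addmult b j + addmult a k) + addmult b l"
    by (simp add: f_def add.assoc)
  also have "\<dots> = addmult a i + (addmult a k + addmult b j) + addmult b l"
    using addmult_commute[OF ab] by metis
  also have "\<dots> = f (i + k) (j + l)" by (simp add: f_def add.assoc addmult_add)
  finally show ?thesis .
qed

lemma f_addmult: "addmult (f i j) n = f (i * n) (j * n)"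
proof (induction n)
  case 0 then show ?case by (simp add: f_def)
next
  case (Suc n) then show ?case by (simp add: f_add add.commute)
qed

lemma p_gt: "p > 1" using pr prime_gt_1_nat by blast

lemma f_mod: "f i j = f (i mod p^2) (j mod p)"
  unfolding f_def using addmult_mod[OF ap] addmult_mod[OF bp] by metis

lemma f_inj:
  assumes "f i j = f k l"
  shows "[i = k] (mod p^2) \<and> [j = l] (mod p)"
proof -
  have "f (i mod p^2) (j mod p) = f (k mod p^2) (l mod p)" using assms f_mod by metis
  moreover have "(i mod p^2, j mod p) \<in> {..<p^2} \<times> {..<p}" "(k mod p^2, l mod p) \<in> {..<p^2} \<times> {..<p}"
    using p_gt by auto
  moreover have "inj_on (\<lambda>(x1, x2). addmult a x1 + addmult b x2) ({..<p^2} \<times> {..<p})"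
    using bij unfolding bij_betw_def by blast
  ultimately have "(i mod p^2, j mod p) = (k mod p^2, l mod p)"
    unfolding f_def by (smt (verit) case_prod_conv inj_onD)
  then show ?thesis unfolding cong_def by simp
qed

lemma coords_f:
  assumes "i < p^2" "j < p"
  shows "coords p a b (f i j) = (i, j)"
  unfolding coords_def
proof (rule the_equality)
  show "fst (i, j) < p\<^sup>2 \<and> snd (i, j) < p \<and> f i j = addmult a (fst (i, j)) + addmult b (snd (i, j))"
    using assms by (simp add: f_def)
next
  fix c assume c: "fst c < p\<^sup>2 \<and> snd c < p \<and> f i j = addmult a (fst c) + addmult b (snd c)"
  then have "f i j = f (fst c) (snd c)" by (simp add: f_def)
  from f_inj[OF this] have "i mod p^2 = fst c mod p^2" "j mod p = snd c mod p" unfolding cong_def by auto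
  with c assms show "c = (i, j)" by (cases c) simp
qed

lemma coords_range: "fst (coords p a b x) < p^2 \<and> snd (coords p a b x) < p
   \<and> x = f (fst (coords p a b x)) (snd (coords p a b x))"
proof -
  obtain i j where "i < p^2" "j < p" "x = f i j"
    using bij unfolding bij_betw_def f_def by force
  then show ?thesis using coords_f by simp
qed

lemma mult_f: "x * f i j = addmult x i + addmult (x * b) j"
  using ln idn unfolding f_def left_nearring_def nr_identity_def
  by (simp add: mult_addmult[OF ln])

lemma prod_f:
  assumes "x = f x1 x2"
  shows "x * f i j = f (x1 * i + alpha p a b x * j) (x2 * i + beta p a b x * j)"
proof -
  have xb: "x * b = f (alpha p a b x) (beta p a b x)"
    unfolding alpha_def beta_def using coords_range by metis
  show ?thesis unfolding mult_f xb using assms by (simp add: f_addmult f_add mult.commute)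
qed

end


theorem lemma9:
  fixes p :: nat and a b :: "'a::{group_add, semigroup_mult}"
  assumes "prime p"
    and "left_nearring TYPE('a)"
    and "nr_local a"
    and "\<not> nearfield a"
    and "addmult a (p^2) = 0" and "addmult b p = 0" and "a + b = b + a"
    and "bij_betw (\<lambda>(x1, x2). addmult a x1 + addmult b x2) ({..<p^2} \<times> {..<p}) (UNIV :: 'a set)"
  shows "(\<forall>x1 x2 y1 y2. x1 < p^2 \<longrightarrow> x2 < p \<longrightarrow> y1 < p^2 \<longrightarrow> y2 < p \<longrightarrow>
           (let x = addmult a x1 + addmult b x2; y = addmult a y1 + addmult b y2 in
             x * y = addmult a (x1 * y1 + alpha p a b x * y2)
                   + addmult b (x2 * y1 + beta p a b x * y2)))
    \<and> ((alpha p a b 0 = 0 \<and> beta p a b 0 = 0) \<longleftrightarrow> zero_symmetric TYPE('a))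
    \<and> alpha p a b a = 0 \<and> beta p a b a = 1
    \<and> (\<forall>x. p dvd alpha p a b x)
    \<and> (\<forall>x y. [alpha p a b (x * y) = fst (coords p a b x) * alpha p a b y + alpha p a b x * beta p a b y] (mod p))
    \<and> (\<forall>x y. [beta p a b (x * y) = snd (coords p a b x) * alpha p a b y + beta p a b x * beta p a b y] (mod p))"
  proof -
  have idn: "nr_identity a" using assms(3) unfolding nr_local_def by simp
  interpret S: setup9 p a b using assms idn by unfold_locales auto
  have ln: "left_nearring TYPE('a)" by (rule assms(2))
  note cr = S.coords_range
  have p1: "p > 1" by (rule S.p_gt)
  have P1: "\<forall>x1 x2 y1 y2. x1 < p^2 \<longrightarrow> x2 < p \<longrightarrow> y1 < p^2 \<longrightarrow> y2 < p \<longrightarrow>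
           (let x = addmult a x1 + addmult b x2; y = addmult a y1 + addmult b y2 in
             x * y = addmult a (x1 * y1 + alpha p a b x * y2)
                   + addmult b (x2 * y1 + beta p a b x * y2))"
    using S.prod_f unfolding S.f_def Let_def by blast
  have z: "S.f 0 0 = 0" by (simp add: S.f_def)
  have c0: "coords p a b 0 = (0, 0)" using S.coords_f[of 0 0] p1 z by simp
  have P0: "(alpha p a b 0 = 0 \<and> beta p a b 0 = 0) \<longleftrightarrow> zero_symmetric TYPE('a)"
  proof
    assume h: "alpha p a b 0 = 0 \<and> beta p a b 0 = 0"
    have "0 * b = 0" using cr[of "0 * b"] h unfolding alpha_def beta_def using z by metis
    then have "0 * y = 0" for y :: 'a
    proof -
      have "0 * y = 0 * S.f (fst (coords p a b y)) (snd (coords p a b y))" using cr[of y] by metis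
      then show ?thesis using S.mult_f \<open>0 * b = 0\<close> by simp
    qed
    then show "zero_symmetric TYPE('a)" unfolding zero_symmetric_def by simp
  next
    assume "zero_symmetric TYPE('a)"
    then have "0 * b = 0" unfolding zero_symmetric_def by simp
    then show "alpha p a b 0 = 0 \<and> beta p a b 0 = 0" unfolding alpha_def beta_def using c0 by simp
  qed
  have "a * b = S.f 0 1" using idn unfolding nr_identity_def by (simp add: S.f_def)
  then have cab: "coords p a b (a * b) = (0, 1)" using S.coords_f[of 0 1] p1 by simp
  have P2: "p dvd alpha p a b x" for x
  proof -
    have xb: "x * b = S.f (alpha p a b x) (beta p a b x)"
      unfolding alpha_def beta_def using cr by metis
    have "S.f (alpha p a b x * p) (beta p a b x * p) = x * addmult b p"
      using xb S.f_addmult mult_addmult[OF ln] by metis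
    also have "\<dots> = S.f 0 0" using assms(6) z mult_zero_right_nr[OF ln] by simp
    finally have "[alpha p a b x * p = 0] (mod p^2)" using S.f_inj by blast
    then have "p^2 dvd alpha p a b x * p" by (simp add: cong_0_iff)
    then show ?thesis using p1 by (simp add: power2_eq_square)
  qed
  have P34: "[alpha p a b (x * y) = fst (coords p a b x) * alpha p a b y + alpha p a b x * beta p a b y] (mod p)
     \<and> [beta p a b (x * y) = snd (coords p a b x) * alpha p a b y + beta p a b x * beta p a b y] (mod p)" for x y
  proof -
    have xyb: "(x * y) * b = S.f (alpha p a b (x*y)) (beta p a b (x*y))"
      unfolding alpha_def beta_def using cr by metis
    have yb: "y * b = S.f (alpha p a b y) (beta p a b y)"
      unfolding alpha_def beta_def using cr by metis
    have "(x * y) * b = x * (y * b)" by (simp add: mult.assoc)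
    also have "\<dots> = S.f (fst (coords p a b x) * alpha p a b y + alpha p a b x * beta p a b y)
        (snd (coords p a b x) * alpha p a b y + beta p a b x * beta p a b y)"
      unfolding yb using S.prod_f cr by metis
    finally have e: "S.f (alpha p a b (x*y)) (beta p a b (x*y)) = S.f (fst (coords p a b x) * alpha p a b y + alpha p a b x * beta p a b y)
        (snd (coords p a b x) * alpha p a b y + beta p a b x * beta p a b y)" using xyb by simp
    from S.f_inj[OF e] show ?thesis
      by (meson cong_dvd_modulus_nat dvd_power[of 2 p] zero_less_numeral)
  qed
  show ?thesis using P1 P0 cab P2 P34 unfolding alpha_def beta_def by simp
qed

end
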